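(* Let $\{F_1,\ldots,F_m\}$, $m\ge 2$, be a collection of $X$-forests, either all rooted or all unrooted. Let $1\le p\le m$ and let $T_1,\ldots,T_t$ ($t\ge1$) be connected components of $F_p$, with $Y=L(T_1)\cup\cdots\cup L(T_t)$. Suppose that for some $q\neq p$, $1\le q\le m$, there is an edge $e$ of $F_q$ such that, if $T_e^1$ and $T_e^2$ denote the two subtrees created by removing $e$ from $F_q$, we have $L(T_e^1)\subseteq Y$ and $L(T_e^2)\cap Y=\emptyset$. Let $F'_q=F_q\setminus\{e\}$ and $F'_j=F_j$ for $j\neq q$. Then $\{F'_1,\ldots,F'_m\}$ and $\{F_1,\ldots,F_m\}$ have the same collection of maximum agreement forests.
   Context: Let $X$ be a finite label set. An unrooted $X$-forest is a subgraph of a tree whose leaves are labeled bijectively by $X$ and whose unlabeled vertices have degree at least 3, such that each component contains a leaf and the label sets of the components partition $X$. A rooted $X$-forest is defined in the same way, where $X$ contains a distinguished label $\rho$ whose leaf is the root of the underlying tree $T$, and each component is rooted at $\rho$ if it contains it and otherwise at the lowest common ancestor in $T$ of its labeled leaves. Forests are considered up to forced contraction (unlabeled degree-2 vertices other than component roots are suppressed; unlabeled vertices of degree less than 2 are deleted). For a subtree $T'$, $L(T')$ is its set of labels. $\mathrm{Ord}(F)$ is the number of components. $F'$ is a subforest of $F$ if, up to forced contraction, $F'$ is isomorphic (preserving labels, and roots in the rooted case) to $F$ with some edges deleted. An agreement forest for a collection of $X$-forests is an $X$-forest that is a subforest of each of them; a maximum agreement forest is one of minimum order. $F\setminus\{e\}$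 denotes $F$ with edge $e$ deleted. *)

theory Defs
  imports Main
begin

text \<open>Graphs: vertices of an arbitrary type 'v, undirected edges as 2-element vertex sets.\<close>

definition reach :: "'v set set \<Rightarrow> 'v \<Rightarrow> 'v \<Rightarrow> bool" where
  "reach E = (\<lambda>u v. {u, v} \<in> E)\<^sup>*\<^sup>*"

definition deg :: "'v set set \<Rightarrow> 'v \<Rightarrow> nat" where
  "deg E v = card {e \<in> E. v \<in> e}"

definition comps :: "'v set \<Rightarrow> 'v set set \<Rightarrow> 'v set set" where
  "comps W A = {{u \<in> W. reach A w u} | w. w \<in> W}"

record ('v, 'x) xtree =
  tV :: "'v set"
  tE :: "'v set set"
  tlab :: "'x \<Rightarrow> 'v"

text \<open>rt = True: rooted setting with distinguished root label rho (whose leaf is the root);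
  rt = False: unrooted setting (rho is then irrelevant).\<close>
definition is_xtree :: "bool \<Rightarrow> 'x \<Rightarrow> 'x set \<Rightarrow> ('v, 'x) xtree \<Rightarrow> bool" where
  "is_xtree rt rho X T \<longleftrightarrow>
     finite (tV T) \<and> tV T \<noteq> {} \<and>
     (\<forall>e \<in> tE T. \<exists>u v. u \<in> tV T \<and> v \<in> tV T \<and> u \<noteq> v \<and> e = {u, v}) \<and>
     (\<forall>u \<in> tV T. \<forall>v \<in> tV T. reach (tE T) u v) \<and>
     card (tE T) + 1 = card (tV T) \<and>
     inj_on (tlab T) X \<and>
     tlab T ` X = {v \<in> tV T. deg (tE T) v \<le> 1} \<and>
     (\<forall>v \<in> tV T - tlab T ` X. 3 \<le> deg (tE T) v) \<and>
     (rt \<longrightarrow> rho \<in> X)"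

text \<open>An X-forest, represented as a subgraph (W, A) of an X-tree T.\<close>
record ('v, 'x) xfor =
  ftree :: "('v, 'x) xtree"
  fW :: "'v set"
  fA :: "'v set set"

definition is_xforest :: "bool \<Rightarrow> 'x \<Rightarrow> 'x set \<Rightarrow> ('v, 'x) xfor \<Rightarrow> bool" where
  "is_xforest rt rho X F \<longleftrightarrow>
     is_xtree rt rho X (ftree F) \<and>
     fW F \<subseteq> tV (ftree F) \<and> fA F \<subseteq> tE (ftree F) \<and>
     (\<forall>e \<in> fA F. e \<subseteq> fW F) \<and>
     tlab (ftree F) ` X \<subseteq> fW F \<and>
     (\<forall>C \<in> comps (fW F) (fA F). \<exists>x \<in> X. tlab (ftree F) x \<in> C)"

text \<open>Vertex u lies on the (unique) path between a and b in the tree with edges E.\<close>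
definition on_path :: "'v set set \<Rightarrow> 'v \<Rightarrow> 'v \<Rightarrow> 'v \<Rightarrow> bool" where
  "on_path E a b u \<longleftrightarrow> u = a \<or> u = b \<or> \<not> (\<lambda>x y. {x, y} \<in> E \<and> x \<noteq> u \<and> y \<noteq> u)\<^sup>*\<^sup>* a b"

text \<open>Ancestor relation in T rooted at the leaf labelled rho.\<close>
definition anc :: "('v, 'x) xtree \<Rightarrow> 'x \<Rightarrow> 'v \<Rightarrow> 'v \<Rightarrow> bool" where
  "anc T rho u v \<longleftrightarrow> on_path (tE T) (tlab T rho) v u"

definition lca :: "('v, 'x) xtree \<Rightarrow> 'x \<Rightarrow> 'v set \<Rightarrow> 'v" where
  "lca T rho S = (THE u. u \<in> tV T \<and> (\<forall>s \<in> S. anc T rho u s) \<and>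
       (\<forall>w \<in> tV T. (\<forall>s \<in> S. anc T rho w s) \<longrightarrow> anc T rho w u))"

text \<open>Roots of the (labelled) components: the LCA in T of the labelled leaves
  (which is the leaf rho itself for the component containing rho).\<close>
definition croots :: "'x set \<Rightarrow> 'x \<Rightarrow> ('v, 'x) xfor \<Rightarrow> 'v set" where
  "croots X rho F = {lca (ftree F) rho (C \<inter> tlab (ftree F) ` X) | C.
       C \<in> comps (fW F) (fA F) \<and> C \<inter> tlab (ftree F) ` X \<noteq> {}}"

record ('v, 'x) lgraph =
  gV :: "'v set"
  gE :: "'v set set"
  glab :: "'x \<Rightarrow> 'v"
  gR :: "'v set"

definition to_graph :: "bool \<Rightarrow> 'x \<Rightarrow> 'x set \<Rightarrow> ('v, 'x) xfor \<Rightarrow> ('v, 'x) lgraph" where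
  "to_graph rt rho X F = \<lparr>gV = fW F, gE = fA F, glab = tlab (ftree F),
       gR = (if rt then croots X rho F else {})\<rparr>"

inductive fc_step :: "'x set \<Rightarrow> ('v, 'x) lgraph \<Rightarrow> ('v, 'x) lgraph \<Rightarrow> bool" for X where
  del: "v \<in> gV G \<Longrightarrow> v \<notin> glab G ` X \<Longrightarrow> deg (gE G) v < 2 \<Longrightarrow>
        fc_step X G \<lparr>gV = gV G - {v}, gE = {e \<in> gE G. v \<notin> e}, glab = glab G, gR = gR G - {v}\<rparr>"
| sup: "v \<in> gV G \<Longrightarrow> v \<notin> glab G ` X \<Longrightarrow> v \<notin> gR G \<Longrightarrow> a \<noteq> b \<Longrightarrow>
        {u. {v, u} \<in> gE G} = {a, b} \<Longrightarrow>
        fc_step X G \<lparr>gV = gV G - {v}, gE = {e \<in> gE G. v \<notin> e} \<union> {{a, b}}, glab = glab G, gR = gR G\<rparr>"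

definition fully_contracted :: "'x set \<Rightarrow> ('v, 'x) lgraph \<Rightarrow> ('v, 'x) lgraph \<Rightarrow> bool" where
  "fully_contracted X G H \<longleftrightarrow> (fc_step X)\<^sup>*\<^sup>* G H \<and> \<not> (\<exists>H'. fc_step X H H')"

definition lg_iso :: "'x set \<Rightarrow> ('v, 'x) lgraph \<Rightarrow> ('v, 'x) lgraph \<Rightarrow> bool" where
  "lg_iso X G H \<longleftrightarrow> (\<exists>f. bij_betw f (gV G) (gV H) \<and> (\<lambda>e. f ` e) ` gE G = gE H \<and>
       (\<forall>x \<in> X. f (glab G x) = glab H x) \<and> f ` gR G = gR H)"

definition fequiv :: "'x set \<Rightarrow> ('v, 'x) lgraph \<Rightarrow> ('v, 'x) lgraph \<Rightarrow> bool" where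
  "fequiv X G H \<longleftrightarrow> (\<exists>G' H'. fully_contracted X G G' \<and> fully_contracted X H H' \<and> lg_iso X G' H')"

definition del_edges :: "('v, 'x) xfor \<Rightarrow> 'v set set \<Rightarrow> ('v, 'x) xfor" where
  "del_edges F D = F\<lparr>fA := fA F - D\<rparr>"

definition subforest :: "bool \<Rightarrow> 'x \<Rightarrow> 'x set \<Rightarrow> ('v, 'x) xfor \<Rightarrow> ('v, 'x) xfor \<Rightarrow> bool" where
  "subforest rt rho X F' F \<longleftrightarrow>
     (\<exists>D. fequiv X (to_graph rt rho X F') (to_graph rt rho X (del_edges F D)))"

definition forest_ord :: "('v, 'x) xfor \<Rightarrow> nat" where
  "forest_ord F = card (comps (fW F) (fA F))"

definition agreement_forest ::
  "bool \<Rightarrow> 'x \<Rightarrow> 'x set \<Rightarrow> nat \<Rightarrow> (nat \<Rightarrow> ('v, 'x) xfor) \<Rightarrow> ('v, 'x) xfor \<Rightarrow> bool" where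
  "agreement_forest rt rho X m Fs F \<longleftrightarrow>
     is_xforest rt rho X F \<and> (\<forall>i \<in> {1..m}. subforest rt rho X F (Fs i))"

definition max_agreement_forest ::
  "bool \<Rightarrow> 'x \<Rightarrow> 'x set \<Rightarrow> nat \<Rightarrow> (nat \<Rightarrow> ('v, 'x) xfor) \<Rightarrow> ('v, 'x) xfor \<Rightarrow> bool" where
  "max_agreement_forest rt rho X m Fs F \<longleftrightarrow>
     agreement_forest rt rho X m Fs F \<and>
     (\<forall>G. agreement_forest rt rho X m Fs G \<longrightarrow> forest_ord F \<le> forest_ord G)"

definition comp_labels :: "'x set \<Rightarrow> ('v, 'x) xfor \<Rightarrow> 'x set set" where
  "comp_labels X F = {{x \<in> X. tlab (ftree F) x \<in> C} | C. C \<in> comps (fW F) (fA F)}"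

definition side_labels :: "'x set \<Rightarrow> ('v, 'x) xfor \<Rightarrow> 'v set \<Rightarrow> 'v \<Rightarrow> 'x set" where
  "side_labels X F e a = {x \<in> X. reach (fA F - {e}) a (tlab (ftree F) x)}"

end

theory Submission
  imports Defs
begin

lemma reach_refl[simp]: "reach E u u" by (simp add: reach_def)

lemma reach_step: "reach E u w \<Longrightarrow> {w, z} \<in> E \<Longrightarrow> reach E u z"
  unfolding reach_def by (rule rtranclp.rtrancl_into_rtrancl)

lemma reach_edge: "{u, w} \<in> E \<Longrightarrow> reach E u w"
  using reach_step[of E u u w] by simp

lemma reach_trans: "reach E u w \<Longrightarrow> reach E w z \<Longrightarrow> reach E u z"
  unfolding reach_def by (rule rtranclp_trans)

lemma reach_sym: "reach E u w \<Longrightarrow> reach E w u"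
proof -
  have "symp (\<lambda>u v. {u, v} \<in> E)" by (auto simp: symp_def insert_commute)
  then show "reach E u w \<Longrightarrow> reach E w u" unfolding reach_def
    by (meson symp_rtranclp sympD)
qed

lemma reach_mono: "reach E u w \<Longrightarrow> E \<subseteq> E' \<Longrightarrow> reach E' u w"
  unfolding reach_def by (erule rtranclp_mono[THEN predicate2D, rotated]) auto

lemma reach_induct[consumes 1, case_names refl step]:
  assumes "reach E u w" "P u" "\<And>y z. reach E u y \<Longrightarrow> {y, z} \<in> E \<Longrightarrow> P y \<Longrightarrow> P z"
  shows "P w"
  using assms(1) unfolding reach_def
proof (induction rule: rtranclp_induct)
  case base show ?case by (rule assms(2))
next
  case (step y z) then show ?case using assms(3)[of y z] unfolding reach_def by blast
qed

definition wfg :: "('v, 'x) lgraph \<Rightarrow> bool" where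
  "wfg G \<longleftrightarrow> finite (gV G) \<and> (\<forall>f\<in>gE G. \<exists>u w. u \<in> gV G \<and> w \<in> gV G \<and> u \<noteq> w \<and> f = {u, w})"

lemma wfg_finE: "wfg G \<Longrightarrow> finite (gE G)"
proof -
  assume "wfg G"
  then have "gE G \<subseteq> Pow (gV G)" "finite (gV G)" unfolding wfg_def by auto
  then show ?thesis by (meson finite_Pow_iff finite_subset)
qed

lemma wfg_edge: "wfg G \<Longrightarrow> {u, w} \<in> gE G \<Longrightarrow> u \<in> gV G \<and> w \<in> gV G \<and> u \<noteq> w"
  unfolding wfg_def by (metis doubleton_eq_iff insert_iff)

lemma reach_avoid:
  assumes "reach E u w" "u \<noteq> v" "\<And>y. {v, y} \<in> E \<Longrightarrow> y = z"
  shows "(w \<noteq> v \<longrightarrow> reach {f\<in>E. v \<notin> f} u w) \<and> (w = v \<longrightarrow> reach {f\<in>E. v \<notin> f} u z)"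
  using assms(1)
proof (induction rule: reach_induct)
  case refl then show ?case using assms(2) by simp
next
  case (step y x)
  show ?case
  proof (cases "y = v")
    case True
    then have "{v, x} \<in> E" using step(2) by simp
    then have "x = z" using assms(3) by simp
    moreover have "reach {f\<in>E. v \<notin> f} u z" using step(3) True by simp
    ultimately show ?thesis by force
  next
    case False
    show ?thesis
    proof (cases "x = v")
      case True
      then have "{v, y} \<in> E" using step(2) by (simp add: insert_commute)
      then have "y = z" using assms(3) by simp
      then show ?thesis using step(3) False True by simp
    next
      case False2: False
      then have e1: "{y, x} \<in> {f\<in>E. v \<notin> f}" using step(2) False by simp
      have "reach {f\<in>E. v \<notin> f} u y" using step(3) False by simp
      from reach_step[OF this e1] show ?thesis using False2 by simp
    qed
  qed
qed

lemma reach_sup: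
  assumes "reach E u w" "u \<noteq> v" "{y. {v, y} \<in> E} = {a, b}"
  shows "(w \<noteq> v \<longrightarrow> reach ({f\<in>E. v \<notin> f} \<union> {{a, b}}) u w) \<and>
         (w = v \<longrightarrow> reach ({f\<in>E. v \<notin> f} \<union> {{a, b}}) u a)"
  using assms(1)
proof (induction rule: reach_induct)
  case refl then show ?case using assms(2) by simp
next
  case (step y x)
  let ?E = "{f\<in>E. v \<notin> f} \<union> {{a, b}}"
  have ab: "{a, b} \<in> ?E" by simp
  have ab': "{b, a} \<in> ?E" by (simp add: insert_commute)
  have ba: "reach ?E u b" if "reach ?E u a" using reach_step[OF that ab] .
  have ab2: "reach ?E u a" if "reach ?E u b" using reach_step[OF that ab'] .
  show ?case
  proof (cases "y = v")
    case True
    then have "{v, x} \<in> E" using step(2) by simp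
    then have "x \<in> {y. {v, y} \<in> E}" by simp
    then have "x \<in> {a, b}" using assms(3) by simp
    moreover have "reach ?E u a" using step(3) True by simp
    ultimately have "reach ?E u x" using ba by auto
    then show ?thesis using \<open>reach ?E u a\<close> by simp
  next
    case False
    show ?thesis
    proof (cases "x = v")
      case True
      then have "{v, y} \<in> E" using step(2) by (simp add: insert_commute)
      then have "y \<in> {y. {v, y} \<in> E}" by simp
      then have "y \<in> {a, b}" using assms(3) by simp
      moreover have "reach ?E u y" using step(3) False by simp
      ultimately have "reach ?E u a" using ab2 by auto
      then show ?thesis using True by simp
    next
      case False2: False
      then have e1: "{y, x} \<in> ?E" using step(2) False by simp
      have "reach ?E u y" using step(3) False by simp
      from reach_step[OF this e1] show ?thesis using False2 by simp
    qed
  qed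
qed

lemma deg_lt2_nb:
  assumes "finite E" "deg E v < 2" "{v, y1} \<in> E" "{v, y2} \<in> E"
  shows "y1 = y2"
proof (rule ccontr)
  assume ne: "y1 \<noteq> y2"
  then have "{v, y1} \<noteq> {v, y2}" by (metis doubleton_eq_iff)
  moreover have "{{v, y1}, {v, y2}} \<subseteq> {e \<in> E. v \<in> e}" using assms(3,4) by simp
  moreover have "finite {e \<in> E. v \<in> e}" using assms(1) by simp
  ultimately have "card {{v, y1}, {v, y2}} \<le> deg E v" unfolding deg_def by (meson card_mono)
  moreover have "card {{v, y1}, {v, y2}} = 2" using \<open>{v, y1} \<noteq> {v, y2}\<close> by simp
  ultimately show False using assms(2) by simp
qed

lemma deg_lt2_ex: "finite E \<Longrightarrow> deg E v < 2 \<Longrightarrow> \<exists>z. \<forall>y. {v, y} \<in> E \<longrightarrow> y = z"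
  using deg_lt2_nb by metis

lemma fc_step_lab: "fc_step X G G' \<Longrightarrow> glab G' = glab G"
  by (induction rule: fc_step.induct) auto

lemma fc_step_V: "fc_step X G G' \<Longrightarrow> \<exists>v. v \<in> gV G \<and> v \<notin> glab G ` X \<and> gV G' = gV G - {v}"
proof (induction rule: fc_step.induct)
  case (del v G) then show ?case by (intro exI[of _ v]) simp
next
  case (sup v G a b) then show ?case by (intro exI[of _ v]) simp
qed

lemma wfgI: "finite (gV G) \<Longrightarrow> (\<And>f. f \<in> gE G \<Longrightarrow> \<exists>u w. u \<in> gV G \<and> w \<in> gV G \<and> u \<noteq> w \<and> f = {u, w}) \<Longrightarrow> wfg G"
  unfolding wfg_def by blast

lemma wfgD: "wfg G \<Longrightarrow> f \<in> gE G \<Longrightarrow> \<exists>u w. u \<in> gV G \<and> w \<in> gV G \<and> u \<noteq> w \<and> f = {u, w}"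
  unfolding wfg_def by blast

lemma wfg_sub:
  assumes "wfg G" "f \<in> gE G" "v \<notin> f"
  shows "\<exists>u w. u \<in> gV G - {v} \<and> w \<in> gV G - {v} \<and> u \<noteq> w \<and> f = {u, w}"
proof -
  obtain u w where "u \<in> gV G" "w \<in> gV G" "u \<noteq> w" "f = {u, w}" using wfgD[OF assms(1,2)] by blast
  moreover have "u \<noteq> v" "w \<noteq> v" using \<open>f = {u, w}\<close> assms(3) by auto
  ultimately show ?thesis by (intro exI[of _ u] exI[of _ w]) simp
qed

lemma fc_step_wfg: "fc_step X G G' \<Longrightarrow> wfg G \<Longrightarrow> wfg G'"
proof (induction rule: fc_step.induct)
  case (del v G)
  show ?case
  proof (rule wfgI, goal_cases)
    case 1 then show ?case using del(4) by (simp add: wfg_def)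
  next
    case (2 f)
    then have "f \<in> gE G" "v \<notin> f" by simp_all
    from wfg_sub[OF del(4) this] show ?case by (simp only: lgraph.select_convs)
  qed
next
  case (sup v G a b)
  have "a \<in> {u. {v, u} \<in> gE G}" "b \<in> {u. {v, u} \<in> gE G}" unfolding sup(5) by simp_all
  then have "{v, a} \<in> gE G" "{v, b} \<in> gE G" by auto
  then have "a \<in> gV G" "b \<in> gV G" "a \<noteq> v" "b \<noteq> v"
    using wfg_edge[OF sup(6), of v a] wfg_edge[OF sup(6), of v b] by auto
  show ?case
  proof (rule wfgI, goal_cases)
    case 1 then show ?case using sup(6) by (simp add: wfg_def)
  next
    case (2 f)
    then have "(f \<in> gE G \<and> v \<notin> f) \<or> f = {a, b}" by auto
    then show ?case
    proof
      assume "f \<in> gE G \<and> v \<notin> f"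
      then have "f \<in> gE G" "v \<notin> f" by simp_all
      from wfg_sub[OF sup(6) this] show ?case by (simp only: lgraph.select_convs)
    next
      assume "f = {a, b}"
      then show ?case using \<open>a \<in> gV G\<close> \<open>b \<in> gV G\<close> \<open>a \<noteq> v\<close> \<open>b \<noteq> v\<close> sup(4)
        by (intro exI[of _ a] exI[of _ b]) simp
    qed
  qed
qed

lemma fc_step_fwd:
  assumes "fc_step X G G'" "wfg G" "u \<in> gV G'" "w \<in> gV G'" "reach (gE G) u w"
  shows "reach (gE G') u w"
  using assms
proof (induction rule: fc_step.induct)
  case (del v G)
  obtain z where z: "\<forall>y. {v, y} \<in> gE G \<longrightarrow> y = z" using deg_lt2_ex wfg_finE del by metis
  have "u \<noteq> v" "w \<noteq> v" using del by auto
  then show ?case using reach_avoid[OF del(7) \<open>u \<noteq> v\<close>, of z] z by simp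
next
  case (sup v G a b)
  have "u \<noteq> v" "w \<noteq> v" using sup by auto
  then show ?case using reach_sup[OF sup(9) \<open>u \<noteq> v\<close> sup(5)] by simp
qed

lemma fc_step_bwd:
  assumes "fc_step X G G'" "reach (gE G') u w"
  shows "reach (gE G) u w"
  using assms
proof (induction rule: fc_step.induct)
  case (del v G)
  then show ?case by (auto elim: reach_mono)
next
  case (sup v G a b)
  have "a \<in> {u. {v, u} \<in> gE G}" "b \<in> {u. {v, u} \<in> gE G}" unfolding sup(5) by simp_all
  then have va: "{v, a} \<in> gE G" and vb: "{v, b} \<in> gE G" by auto
  then have av: "{a, v} \<in> gE G" by (simp add: insert_commute)
  have rab: "reach (gE G) a b" using reach_step[OF reach_edge[OF av] vb] .
  have rba: "reach (gE G) b a" using reach_sym[OF rab] .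
  show ?case using sup(6)
  proof (induction rule: reach_induct)
    case refl then show ?case by simp
  next
    case (step y z)
    then have "{y, z} \<in> gE G \<or> {y, z} = {a, b}" by auto
    then show ?case
    proof
      assume "{y, z} \<in> gE G" then show ?thesis using reach_step[OF step(3)] by simp
    next
      assume "{y, z} = {a, b}"
      then have "(y = a \<and> z = b) \<or> (y = b \<and> z = a)" by (simp add: doubleton_eq_iff)
      then show ?thesis
      proof
        assume h: "y = a \<and> z = b"
        then have "reach (gE G) u a" using step(3) by simp
        from reach_trans[OF this rab] show ?thesis using h by simp
      next
        assume h: "y = b \<and> z = a"
        then have "reach (gE G) u b" using step(3) by simp
        from reach_trans[OF this rba] show ?thesis using h by simp
      qed
    qed
  qed
qed

lemma fcs_props:
  assumes "(fc_step X)\<^sup>*\<^sup>* G H" "wfg G"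
  shows "wfg H \<and> glab H = glab G \<and> gV H \<subseteq> gV G \<and> (glab G ` X \<subseteq> gV G \<longrightarrow> glab H ` X \<subseteq> gV H)"
  using assms(1)
proof (induction rule: rtranclp_induct)
  case base then show ?case using assms(2) by simp
next
  case (step y z)
  obtain v where v: "v \<in> gV y" "v \<notin> glab y ` X" "gV z = gV y - {v}" using fc_step_V[OF step(2)] by blast
  have "wfg z" using fc_step_wfg[OF step(2)] step(3) by simp
  moreover have "glab z = glab y" using fc_step_lab[OF step(2)] .
  moreover have "gV z \<subseteq> gV y" using v(3) by blast
  moreover have "glab z ` X \<subseteq> gV z" if "glab y ` X \<subseteq> gV y"
    using that v \<open>glab z = glab y\<close> by auto
  ultimately show ?case using step(3) by (metis order_trans)
qed

lemma fcs_fwd: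
  assumes "(fc_step X)\<^sup>*\<^sup>* G H" "wfg G" "u \<in> gV H" "w \<in> gV H" "reach (gE G) u w"
  shows "reach (gE H) u w"
  using assms(1,3,4)
proof (induction rule: rtranclp_induct)
  case base then show ?case using assms(5) by simp
next
  case (step y z)
  have "wfg y" using fcs_props[OF step(1) assms(2)] by simp
  have "gV z \<subseteq> gV y" using fcs_props[OF r_into_rtranclp[of "fc_step X", OF step(2)] \<open>wfg y\<close>] by simp
  then have "reach (gE y) u w" using step by auto
  then show ?case using fc_step_fwd[OF step(2) \<open>wfg y\<close> step(4,5)] by simp
qed

lemma fcs_bwd:
  assumes "(fc_step X)\<^sup>*\<^sup>* G H" "reach (gE H) u w"
  shows "reach (gE G) u w"
  using assms
proof (induction rule: rtranclp_induct)
  case base then show ?case by simp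
next
  case (step y z)
  then show ?case using fc_step_bwd[OF step(2)] by simp
qed

lemma img_pair: "(\<lambda>e. f ` e) {y, z} = {f y, f z}" by simp

lemma iso_fwd:
  assumes "(\<lambda>e. f ` e) ` gE G = gE H" "reach (gE G) u w"
  shows "reach (gE H) (f u) (f w)"
  using assms(2)
proof (induction rule: reach_induct)
  case refl then show ?case by simp
next
  case (step y z)
  have "{f y, f z} \<in> gE H" using step(2) assms(1) img_pair[of f y z] by (metis image_eqI)
  then show ?case using reach_step[OF step(3)] by simp
qed

lemma iso_bwd:
  assumes "wfg G" "bij_betw f (gV G) (gV H)" "(\<lambda>e. f ` e) ` gE G = gE H" "u \<in> gV G" "reach (gE H) (f u) q"
  shows "\<exists>w\<in>gV G. q = f w \<and> reach (gE G) u w"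
  using assms(5)
proof (induction rule: reach_induct)
  case refl then show ?case using assms(4) by auto
next
  case (step y z)
  obtain w where w: "w \<in> gV G" "y = f w" "reach (gE G) u w" using step(3) by blast
  obtain g where g: "g \<in> gE G" "f ` g = {y, z}" using step(2) assms(3) by (metis imageE)
  obtain s t where st: "s \<in> gV G" "t \<in> gV G" "g = {s, t}" using wfgD[OF assms(1) g(1)] by blast
  have inj: "inj_on f (gV G)" using assms(2) bij_betw_def by blast
  have fst: "{f s, f t} = {y, z}" using g(2) st(3) by simp
  then have "(f s = y \<and> f t = z) \<or> (f s = z \<and> f t = y)" by (simp add: doubleton_eq_iff)
  then show ?case
  proof
    assume h: "f s = y \<and> f t = z"
    then have "s = w" using inj st(1) w(1,2) by (simp add: inj_on_eq_iff)
    then have "reach (gE G) u t" using reach_step[OF w(3)] g(1) st(3) by simp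
    then show ?thesis using h st(2) by blast
  next
    assume h: "f s = z \<and> f t = y"
    then have "t = w" using inj st(2) w(1,2) by (simp add: inj_on_eq_iff)
    then have "{w, s} \<in> gE G" using g(1) st(3) by (simp add: insert_commute)
    then have "reach (gE G) u s" using reach_step[OF w(3)] by simp
    then show ?thesis using h st(1) by blast
  qed
qed

lemma lab_transfer:
  assumes "fully_contracted X G1 G1'" "fully_contracted X G2 G2'" "lg_iso X G1' G2'"
    "wfg G1" "wfg G2" "glab G1 ` X \<subseteq> gV G1" "glab G2 ` X \<subseteq> gV G2" "x \<in> X" "y \<in> X"
    "reach (gE G1) (glab G1 x) (glab G1 y)"
  shows "reach (gE G2) (glab G2 x) (glab G2 y)"
proof -
  have s1: "(fc_step X)\<^sup>*\<^sup>* G1 G1'" "(fc_step X)\<^sup>*\<^sup>* G2 G2'" using assms(1,2) fully_contracted_def by auto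
  note p1 = fcs_props[OF s1(1) assms(4)] and p2 = fcs_props[OF s1(2) assms(5)]
  from assms(3) obtain f where f0: "bij_betw f (gV G1') (gV G2') \<and> (\<lambda>e. f ` e) ` gE G1' = gE G2' \<and>
       (\<forall>x \<in> X. f (glab G1' x) = glab G2' x) \<and> f ` gR G1' = gR G2'" unfolding lg_iso_def by (rule exE)
  note f = conjunct1[OF f0] conjunct1[OF conjunct2[OF f0]] conjunct1[OF conjunct2[OF conjunct2[OF f0]]]
  have l1: "glab G1 x \<in> gV G1'" "glab G1 y \<in> gV G1'" using p1 assms(6,8,9) by auto
  have "reach (gE G1') (glab G1 x) (glab G1 y)" using fcs_fwd[OF s1(1) assms(4) l1 assms(10)] .
  then have "reach (gE G2') (f (glab G1 x)) (f (glab G1 y))" using iso_fwd[OF f(2)] by simp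
  then have "reach (gE G2') (glab G2 x) (glab G2 y)" using f(3) p1 p2 assms(8,9) by simp
  then show ?thesis using fcs_bwd[OF s1(2)] by simp
qed

lemma lab_transfer_rev:
  assumes "fully_contracted X G1 G1'" "fully_contracted X G2 G2'" "lg_iso X G1' G2'"
    "wfg G1" "wfg G2" "glab G1 ` X \<subseteq> gV G1" "glab G2 ` X \<subseteq> gV G2" "x \<in> X" "y \<in> X"
    "reach (gE G2) (glab G2 x) (glab G2 y)"
  shows "reach (gE G1) (glab G1 x) (glab G1 y)"
proof -
  have s1: "(fc_step X)\<^sup>*\<^sup>* G1 G1'" "(fc_step X)\<^sup>*\<^sup>* G2 G2'" using assms(1,2) fully_contracted_def by auto
  note p1 = fcs_props[OF s1(1) assms(4)] and p2 = fcs_props[OF s1(2) assms(5)]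
  from assms(3) obtain f where f0: "bij_betw f (gV G1') (gV G2') \<and> (\<lambda>e. f ` e) ` gE G1' = gE G2' \<and>
       (\<forall>x \<in> X. f (glab G1' x) = glab G2' x) \<and> f ` gR G1' = gR G2'" unfolding lg_iso_def by (rule exE)
  note f = conjunct1[OF f0] conjunct1[OF conjunct2[OF f0]] conjunct1[OF conjunct2[OF conjunct2[OF f0]]]
  have l2: "glab G2 x \<in> gV G2'" "glab G2 y \<in> gV G2'" using p2 assms(7,8,9) by auto
  have l1: "glab G1 x \<in> gV G1'" "glab G1 y \<in> gV G1'" using p1 assms(6,8,9) by auto
  have "reach (gE G2') (glab G2 x) (glab G2 y)" using fcs_fwd[OF s1(2) assms(5) l2 assms(10)] .
  then have "reach (gE G2') (f (glab G1 x)) (f (glab G1 y))" using f(3) p1 p2 assms(8,9) by simp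
  then obtain w where w: "w \<in> gV G1'" "f (glab G1 y) = f w" "reach (gE G1') (glab G1 x) w"
    using iso_bwd[OF conjunct1[OF p1] f(1,2) l1(1)] by blast
  have "inj_on f (gV G1')" using f(1) bij_betw_def by blast
  then have "w = glab G1 y" using w(1,2) l1(2) by (simp add: inj_on_eq_iff)
  then have "reach (gE G1') (glab G1 x) (glab G1 y)" using w(3) by simp
  then show ?thesis using fcs_bwd[OF s1(1)] by simp
qed

lemma deg_sum:
  assumes "finite E" "finite S"
  shows "(\<Sum>v\<in>S. card {f\<in>E. v \<in> f}) = (\<Sum>f\<in>E. card (f \<inter> S))"
proof -
  have "(\<Sum>v\<in>S. card {f\<in>E. v \<in> f}) = (\<Sum>v\<in>S. \<Sum>f\<in>E. if v \<in> f then 1 else 0)"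
  proof (rule sum.cong)
    fix v show "card {f\<in>E. v \<in> f} = (\<Sum>f\<in>E. if v \<in> f then 1 else 0)"
      using sum.inter_filter[OF assms(1), of "\<lambda>_. 1::nat" "\<lambda>f. v \<in> f"] by simp
  qed simp
  also have "\<dots> = (\<Sum>f\<in>E. \<Sum>v\<in>S. if v \<in> f then 1 else 0)" by (rule sum.swap)
  also have "\<dots> = (\<Sum>f\<in>E. card (f \<inter> S))"
  proof (rule sum.cong)
    fix f
    have "f \<inter> S = {v\<in>S. v \<in> f}" by blast
    then show "(\<Sum>v\<in>S. if v \<in> f then 1 else 0) = card (f \<inter> S)"
      using sum.inter_filter[OF assms(2), of "\<lambda>_. 1::nat" "\<lambda>v. v \<in> f"] by simp
  qed simp
  finally show ?thesis .
qed

lemma card_doubleton_int: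
  assumes "u \<noteq> w"
  shows "card ({u, w} \<inter> S) = (if u \<in> S then 1 else 0) + (if w \<in> S then 1 else 0)"
  using assms by (cases "u \<in> S"; cases "w \<in> S") (auto simp: Int_insert_left)

lemma reach_first:
  assumes "reach E v w" "v \<noteq> w"
  shows "\<exists>z. {v, z} \<in> E"
  using assms(1) unfolding reach_def
proof (cases rule: converse_rtranclpE)
  case base then show ?thesis using assms(2) by simp
next
  case (step y) then show ?thesis by blast
qed

lemma edge_obtain:
  assumes "\<forall>f\<in>E. \<exists>u w. u \<in> V \<and> w \<in> V \<and> u \<noteq> w \<and> f = {u, w}" "f \<in> E"
  obtains u w where "u \<in> V" "w \<in> V" "u \<noteq> w" "f = {u, w}"
proof -
  from bspec[OF assms(1) assms(2)] obtain u w where "u \<in> V \<and> w \<in> V \<and> u \<noteq> w \<and> f = {u, w}"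
    by (elim exE)
  then show thesis by (elim conjE) (rule that)
qed

lemma tree_bound:
  assumes "finite V" "\<forall>f\<in>E. \<exists>u w. u \<in> V \<and> w \<in> V \<and> u \<noteq> w \<and> f = {u, w}"
    "\<forall>u\<in>V. \<forall>w\<in>V. reach E u w" "card E + 1 = card V" "S \<subseteq> V" "S \<noteq> {}"
  shows "card {f\<in>E. f \<subseteq> S} < card S"
  using assms
proof (induction "card V" arbitrary: V E S rule: less_induct)
  case less
  have finE: "finite E"
  proof -
    have "E \<subseteq> Pow V"
    proof
      fix f assume "f \<in> E"
      then obtain u w where "u \<in> V" "w \<in> V" "f = {u, w}" by (rule edge_obtain[OF less.prems(2)])
      then show "f \<in> Pow V" by simp
    qed
    then show ?thesis using less.prems(1) by (meson finite_Pow_iff finite_subset)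
  qed
  have finS: "finite S" using less.prems(1,5) finite_subset by blast
  have cS: "card S > 0" using finS less.prems(6) by (simp add: card_gt_0_iff)
  show ?case
  proof (cases "E = {}")
    case True then show ?thesis using cS by simp
  next
    case False
    then obtain f0 where "f0 \<in> E" by blast
    then obtain u0 w0 where "u0 \<in> V" "w0 \<in> V" "u0 \<noteq> w0" by (rule edge_obtain[OF less.prems(2)])
    then have "{u0, w0} \<subseteq> V" "card {u0, w0} = 2" by auto
    then have cV2: "card V \<ge> 2" using less.prems(1) card_mono by metis
    have dsum: "(\<Sum>v\<in>V. card {f\<in>E. v \<in> f}) = 2 * card E"
    proof -
      have "(\<Sum>v\<in>V. card {f\<in>E. v \<in> f}) = (\<Sum>f\<in>E. card (f \<inter> V))" by (rule deg_sum[OF finE less.prems(1)])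
      also have "\<dots> = (\<Sum>f\<in>E. 2)"
      proof (rule sum.cong)
        fix f assume "f \<in> E"
        then obtain u w where "u \<in> V" "w \<in> V" "u \<noteq> w" "f = {u, w}" by (rule edge_obtain[OF less.prems(2)])
        then show "card (f \<inter> V) = 2" using card_doubleton_int[of u w V] by simp
      qed simp
      finally show ?thesis by simp
    qed
    obtain v where v: "v \<in> V" "deg E v < 2"
    proof (rule ccontr)
      assume "\<not> thesis"
      then have "\<forall>v\<in>V. 2 \<le> card {f\<in>E. v \<in> f}" using that unfolding deg_def by (meson not_less)
      then have "(\<Sum>v\<in>V. 2) \<le> (\<Sum>v\<in>V. card {f\<in>E. v \<in> f})" by (intro sum_mono) simp
      then show False using dsum less.prems(4) by simp
    qed
    have "\<exists>w\<in>V. w \<noteq> v" using \<open>u0 \<in> V\<close> \<open>w0 \<in> V\<close> \<open>u0 \<noteq> w0\<close> by (cases "u0 = v") auto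
    then obtain w where w: "w \<in> V" "w \<noteq> v" by blast
    obtain z where z: "{v, z} \<in> E" using reach_first[of E v w] less.prems(3) v(1) w by blast
    have zu: "\<And>y. {v, y} \<in> E \<Longrightarrow> y = z" using deg_lt2_nb[OF finE v(2)] z by blast
    define V' where "V' = V - {v}"
    define E' where "E' = {f\<in>E. v \<notin> f}"
    have Eeq: "E = insert {v, z} E'"
    proof
      show "E \<subseteq> insert {v, z} E'"
      proof
        fix f assume f: "f \<in> E"
        show "f \<in> insert {v, z} E'"
        proof (cases "v \<in> f")
          case True
          obtain a b where ab: "f = {a, b}" using f by (rule edge_obtain[OF less.prems(2)])
          then have "f = {v, b} \<or> f = {v, a}" using True by (auto simp: insert_commute)
          then have "f = {v, z}"
          proof
            assume h: "f = {v, b}" then have "b = z" using zu f by simp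
            then show ?thesis using h by simp
          next
            assume h: "f = {v, a}" then have "a = z" using zu f by simp
            then show ?thesis using h by simp
          qed
          then show ?thesis by simp
        next
          case False then show ?thesis using f E'_def by simp
        qed
      qed
    next
      show "insert {v, z} E' \<subseteq> E" using z E'_def by auto
    qed
    have "{v, z} \<notin> E'" using E'_def by simp
    moreover have "finite E'" using finE unfolding E'_def by simp
    ultimately have "card (insert {v, z} E') = card E' + 1" by simp
    then have cE: "card E = card E' + 1" by (subst Eeq)
    have cV: "card V = card V' + 1" using v(1) less.prems(1) V'_def
      by (metis card_Suc_Diff1 Suc_eq_plus1)
    have IH: "card {f\<in>E'. f \<subseteq> S'} < card S'" if "S' \<subseteq> V'" "S' \<noteq> {}" for S'
    proof (rule less.hyps[of V' E' S'])
      show "card V' < card V" using cV by simp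
      show "finite V'" using less.prems(1) V'_def by simp
      show "\<forall>f\<in>E'. \<exists>u w. u \<in> V' \<and> w \<in> V' \<and> u \<noteq> w \<and> f = {u, w}"
      proof
        fix f assume "f \<in> E'"
        then have "f \<in> E" "v \<notin> f" using E'_def by auto
        from \<open>f \<in> E\<close> obtain u w where "u \<in> V" "w \<in> V" "u \<noteq> w" "f = {u, w}" by (rule edge_obtain[OF less.prems(2)])
        moreover have "u \<noteq> v" "w \<noteq> v" using \<open>v \<notin> f\<close> \<open>f = {u, w}\<close> by auto
        ultimately show "\<exists>u w. u \<in> V' \<and> w \<in> V' \<and> u \<noteq> w \<and> f = {u, w}" using V'_def
          by (intro exI[of _ u] exI[of _ w]) simp
      qed
      show "\<forall>u\<in>V'. \<forall>w\<in>V'. reach E' u w"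
      proof (intro ballI)
        fix u w assume "u \<in> V'" "w \<in> V'"
        then have "u \<in> V" "w \<in> V" "u \<noteq> v" "w \<noteq> v" using V'_def by auto
        then have "reach E u w" using less.prems(3) by blast
        from reach_avoid[OF this \<open>u \<noteq> v\<close> zu] show "reach E' u w" using \<open>w \<noteq> v\<close> E'_def by simp
      qed
      show "card E' + 1 = card V'" using cE cV less.prems(4) by simp
    qed (use that in auto)
    show ?thesis
    proof (cases "v \<in> S")
      case False
      then have "S \<subseteq> V'" using less.prems(5) V'_def by blast
      moreover have "{f\<in>E. f \<subseteq> S} = {f\<in>E'. f \<subseteq> S}" using False E'_def by blast
      ultimately show ?thesis using IH less.prems(6) by simp
    next
      case True
      show ?thesis
      proof (cases "S = {v}")
        case True
        have "{f\<in>E. f \<subseteq> S} = {}"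
        proof (rule ccontr)
          assume "{f\<in>E. f \<subseteq> S} \<noteq> {}"
          then obtain f where "f \<in> E" "f \<subseteq> {v}" using True by blast
          from \<open>f \<in> E\<close> obtain a b where "a \<in> V" "b \<in> V" "a \<noteq> b" "f = {a, b}" by (rule edge_obtain[OF less.prems(2)])
          then show False using \<open>f \<subseteq> {v}\<close> by auto
        qed
        then have "card {f\<in>E. f \<subseteq> S} = 0" by (simp only: card.empty)
        then show ?thesis using cS by linarith
      next
        case False
        have S': "S - {v} \<subseteq> V'" "S - {v} \<noteq> {}" using less.prems(5) V'_def False True by auto
        have "{f\<in>E. f \<subseteq> S} \<subseteq> insert {v, z} {f\<in>E'. f \<subseteq> S - {v}}" using Eeq E'_def by auto
        then have "card {f\<in>E. f \<subseteq> S} \<le> card (insert {v, z} {f\<in>E'. f \<subseteq> S - {v}})"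
          using finE E'_def by (intro card_mono) auto
        also have "\<dots> \<le> card {f\<in>E'. f \<subseteq> S - {v}} + 1" by (simp add: card_insert_le_m1)
        also have "\<dots> < card (S - {v}) + 1" using IH[OF S'] by simp
        also have "\<dots> = card S" using True finS card_Suc_Diff1[OF finS True] by simp
        finally show ?thesis .
      qed
    qed
  qed
qed

definition cross :: "'v set \<Rightarrow> 'v set \<Rightarrow> bool" where
  "cross P f \<longleftrightarrow> f \<inter> P \<noteq> {} \<and> \<not> f \<subseteq> P"

definition Rg :: "'v set \<Rightarrow> ('v, 'x) lgraph \<Rightarrow> ('v, 'x) lgraph" where
  "Rg P G = \<lparr>gV = gV G - P, gE = {f\<in>gE G. f \<inter> P = {}}, glab = glab G, gR = gR G - (P \<inter> gV G)\<rparr>"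

definition Inv :: "'x set \<Rightarrow> 'v set \<Rightarrow> ('v, 'x) lgraph \<Rightarrow> bool" where
  "Inv X P G \<longleftrightarrow> wfg G \<and> (\<forall>x\<in>X. glab G x \<notin> P) \<and>
     (\<forall>f\<in>gE G. \<forall>g\<in>gE G. cross P f \<longrightarrow> cross P g \<longrightarrow> f = g) \<and>
     (\<forall>S. S \<subseteq> P \<inter> gV G \<longrightarrow> S \<noteq> {} \<longrightarrow> card {f\<in>gE G. f \<subseteq> S} < card S)"

lemma nb_edge:
  assumes "wfg G" "f \<in> gE G" "v \<in> f"
  shows "\<exists>u. f = {v, u}"
proof -
  obtain s t where "f = {s, t}" using wfgD[OF assms(1,2)] by blast
  then show ?thesis using assms(3) by (auto simp: insert_commute)
qed

lemma sim_del:
  assumes inv: "Inv X P G" and v: "v \<in> gV G" "v \<notin> glab G ` X" "deg (gE G) v < 2"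
  defines "G' \<equiv> \<lparr>gV = gV G - {v}, gE = {e \<in> gE G. v \<notin> e}, glab = glab G, gR = gR G - {v}\<rparr>"
  shows "Inv X P G' \<and> (Rg P G' = Rg P G \<or> fc_step X (Rg P G) (Rg P G'))"
proof -
  have st: "fc_step X G G'" unfolding G'_def using v by (rule fc_step.del)
  have w: "wfg G" using inv Inv_def by blast
  have finE: "finite (gE G)" using wfg_finE[OF w] .
  have inv': "Inv X P G'"
    unfolding Inv_def
  proof (intro conjI)
    show "wfg G'" using fc_step_wfg[OF st w] .
    show "\<forall>x\<in>X. glab G' x \<notin> P" using inv unfolding Inv_def G'_def by simp
    show "\<forall>f\<in>gE G'. \<forall>g\<in>gE G'. cross P f \<longrightarrow> cross P g \<longrightarrow> f = g"
      using inv unfolding Inv_def G'_def by simp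
    show "\<forall>S. S \<subseteq> P \<inter> gV G' \<longrightarrow> S \<noteq> {} \<longrightarrow> card {f\<in>gE G'. f \<subseteq> S} < card S"
    proof (intro allI impI)
      fix S assume S: "S \<subseteq> P \<inter> gV G'" "S \<noteq> {}"
      then have "S \<subseteq> P \<inter> gV G" unfolding G'_def by auto
      then have "card {f\<in>gE G. f \<subseteq> S} < card S" using inv S(2) unfolding Inv_def by blast
      moreover have "card {f\<in>gE G'. f \<subseteq> S} \<le> card {f\<in>gE G. f \<subseteq> S}"
        using finE unfolding G'_def by (intro card_mono) auto
      ultimately show "card {f\<in>gE G'. f \<subseteq> S} < card S" by simp
    qed
  qed
  show ?thesis
  proof (cases "v \<in> P")
    case True
    have "Rg P G' = Rg P G" unfolding Rg_def G'_def using True v(1) by auto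
    then show ?thesis using inv' by simp
  next
    case False
    have "deg (gE (Rg P G)) v \<le> deg (gE G) v"
      unfolding deg_def Rg_def using finE by (intro card_mono) auto
    then have d: "deg (gE (Rg P G)) v < 2" using v(3) by simp
    have "fc_step X (Rg P G) \<lparr>gV = gV (Rg P G) - {v}, gE = {e \<in> gE (Rg P G). v \<notin> e},
        glab = glab (Rg P G), gR = gR (Rg P G) - {v}\<rparr>"
      by (rule fc_step.del) (use v False d in \<open>auto simp: Rg_def\<close>)
    moreover have "\<lparr>gV = gV (Rg P G) - {v}, gE = {e \<in> gE (Rg P G). v \<notin> e},
        glab = glab (Rg P G), gR = gR (Rg P G) - {v}\<rparr> = Rg P G'"
      unfolding Rg_def G'_def using False by auto
    ultimately show ?thesis using inv' by simp
  qed
qed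

lemma sim_sup:
  assumes inv: "Inv X P G" and v: "v \<in> gV G" "v \<notin> glab G ` X" "v \<notin> gR G" "a \<noteq> b"
    "{u. {v, u} \<in> gE G} = {a, b}"
  defines "G' \<equiv> \<lparr>gV = gV G - {v}, gE = {e \<in> gE G. v \<notin> e} \<union> {{a, b}}, glab = glab G, gR = gR G\<rparr>"
  shows "Inv X P G' \<and> (Rg P G' = Rg P G \<or> fc_step X (Rg P G) (Rg P G'))"
proof -
  have st: "fc_step X G G'" unfolding G'_def using v by (rule fc_step.sup)
  have w: "wfg G" using inv Inv_def by blast
  have finE: "finite (gE G)" using wfg_finE[OF w] .
  have "a \<in> {u. {v, u} \<in> gE G}" "b \<in> {u. {v, u} \<in> gE G}" unfolding v(5) by simp_all
  then have va: "{v, a} \<in> gE G" and vb: "{v, b} \<in> gE G" by auto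
  have nbr: "u = a \<or> u = b" if "{v, u} \<in> gE G" for u
  proof -
    have "u \<in> {u. {v, u} \<in> gE G}" using that by simp
    then have "u \<in> {a, b}" unfolding v(5) .
    then show ?thesis by simp
  qed
  have aV: "a \<in> gV G" "b \<in> gV G" "a \<noteq> v" "b \<noteq> v"
    using wfg_edge[OF w va] wfg_edge[OF w vb] by auto
  have vab: "{v, a} \<noteq> {v, b}" using v(4) by (simp add: doubleton_eq_iff)
  have crossU: "\<And>f g. f \<in> gE G \<Longrightarrow> g \<in> gE G \<Longrightarrow> cross P f \<Longrightarrow> cross P g \<Longrightarrow> f = g"
    using inv unfolding Inv_def by blast
  have not_both: "\<not> (cross P {v, a} \<and> cross P {v, b})" using crossU[OF va vb] vab by blast
  have K: "cross P {v, a} \<or> cross P {v, b}" if "cross P {a, b}"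
    using that unfolding cross_def by auto
  have forest: "\<And>S. S \<subseteq> P \<inter> gV G \<Longrightarrow> S \<noteq> {} \<Longrightarrow> card {f\<in>gE G. f \<subseteq> S} < card S"
    using inv unfolding Inv_def by blast
  have inv': "Inv X P G'"
    unfolding Inv_def
  proof (intro conjI)
    show "wfg G'" using fc_step_wfg[OF st w] .
    show "\<forall>x\<in>X. glab G' x \<notin> P" using inv unfolding Inv_def G'_def by simp
    show "\<forall>f\<in>gE G'. \<forall>g\<in>gE G'. cross P f \<longrightarrow> cross P g \<longrightarrow> f = g"
    proof (intro ballI impI)
      fix f g assume f: "f \<in> gE G'" and g: "g \<in> gE G'" and cf: "cross P f" and cg: "cross P g"
      have f': "(f \<in> gE G \<and> v \<notin> f) \<or> f = {a, b}" using f unfolding G'_def by auto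
      have g': "(g \<in> gE G \<and> v \<notin> g) \<or> g = {a, b}" using g unfolding G'_def by auto
      have noold: False if "h \<in> gE G" "v \<notin> h" "cross P h" "cross P {a, b}" for h
      proof -
        from K[OF that(4)] show False
        proof
          assume "cross P {v, a}" then have "h = {v, a}" using crossU[OF that(1) va that(3)] by simp
          then show False using that(2) by simp
        next
          assume "cross P {v, b}" then have "h = {v, b}" using crossU[OF that(1) vb that(3)] by simp
          then show False using that(2) by simp
        qed
      qed
      show "f = g"
      proof (cases "f = {a, b}")
        case True
        show ?thesis
        proof (cases "g = {a, b}")
          case True then show ?thesis using \<open>f = {a, b}\<close> by simp
        next
          case False then have "g \<in> gE G" "v \<notin> g" using g' by auto
          then show ?thesis using noold cg cf \<open>f = {a, b}\<close> by blast
        qed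
      next
        case False
        then have f2: "f \<in> gE G" "v \<notin> f" using f' by auto
        show ?thesis
        proof (cases "g = {a, b}")
          case True then show ?thesis using noold[OF f2 cf] cg by simp
        next
          case False then have "g \<in> gE G" using g' by auto
          then show ?thesis using crossU[OF f2(1) _ cf cg] by simp
        qed
      qed
    qed
    show "\<forall>S. S \<subseteq> P \<inter> gV G' \<longrightarrow> S \<noteq> {} \<longrightarrow> card {f\<in>gE G'. f \<subseteq> S} < card S"
    proof (intro allI impI)
      fix S assume S: "S \<subseteq> P \<inter> gV G'" "S \<noteq> {}"
      then have S0: "S \<subseteq> P \<inter> gV G" "v \<notin> S" unfolding G'_def by auto
      have finS: "finite S" using S0(1) w unfolding wfg_def using finite_subset by blast
      define Old where "Old = {f\<in>gE G. v \<notin> f \<and> f \<subseteq> S}"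
      have finOld: "finite Old" using finE unfolding Old_def by simp
      have E'S: "{f\<in>gE G'. f \<subseteq> S} \<subseteq> insert {a, b} Old" unfolding G'_def Old_def by auto
      show "card {f\<in>gE G'. f \<subseteq> S} < card S"
      proof (cases "{a, b} \<subseteq> S")
        case True
        then have abP: "a \<in> P" "b \<in> P" using S0 by auto
        have "v \<in> P"
        proof (rule ccontr)
          assume "v \<notin> P"
          then have "cross P {v, a} \<and> cross P {v, b}" using abP unfolding cross_def by auto
          then show False using not_both by simp
        qed
        have S1: "insert v S \<subseteq> P \<inter> gV G" using S0 \<open>v \<in> P\<close> v(1) by auto
        have c1: "card {f\<in>gE G. f \<subseteq> insert v S} < card (insert v S)" using forest[OF S1] by simp
        have "insert {v, a} (insert {v, b} Old) \<subseteq> {f\<in>gE G. f \<subseteq> insert v S}"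
          using va vb True unfolding Old_def by auto
        then have "card (insert {v, a} (insert {v, b} Old)) \<le> card {f\<in>gE G. f \<subseteq> insert v S}"
          using finE by (intro card_mono) auto
        moreover have "card (insert {v, a} (insert {v, b} Old)) = card Old + 2"
          using vab finOld unfolding Old_def by simp
        moreover have "card (insert v S) = card S + 1" using finS S0(2) by simp
        moreover have "card {f\<in>gE G'. f \<subseteq> S} \<le> card Old + 1"
        proof -
          have "card {f\<in>gE G'. f \<subseteq> S} \<le> card (insert {a, b} Old)"
            using E'S finOld by (intro card_mono) auto
          also have "\<dots> \<le> card Old + 1" by (simp add: card_insert_le_m1)
          finally show ?thesis .
        qed
        ultimately show ?thesis using c1 by linarith
      next
        case False
        have "{f\<in>gE G'. f \<subseteq> S} \<subseteq> {f\<in>gE G. f \<subseteq> S}" using False unfolding G'_def by auto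
        then have "card {f\<in>gE G'. f \<subseteq> S} \<le> card {f\<in>gE G. f \<subseteq> S}"
          using finE by (intro card_mono) auto
        then show ?thesis using forest[OF S0(1) S(2)] by simp
      qed
    qed
  qed
  show ?thesis
  proof (cases "v \<in> P")
    case True
    have "{a, b} \<inter> P \<noteq> {}"
    proof
      assume "{a, b} \<inter> P = {}"
      then have "cross P {v, a} \<and> cross P {v, b}" using True unfolding cross_def by auto
      then show False using not_both by simp
    qed
    then have "Rg P G' = Rg P G" unfolding Rg_def G'_def using True v(3) by auto
    then show ?thesis using inv' by simp
  next
    case False
    show ?thesis
    proof (cases "a \<notin> P \<and> b \<notin> P")
      case True
      have nb: "{u. {v, u} \<in> gE (Rg P G)} = {a, b}"
      proof
        show "{u. {v, u} \<in> gE (Rg P G)} \<subseteq> {a, b}" unfolding Rg_def using nbr by auto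
        show "{a, b} \<subseteq> {u. {v, u} \<in> gE (Rg P G)}" unfolding Rg_def using va vb True False by auto
      qed
      have "fc_step X (Rg P G) \<lparr>gV = gV (Rg P G) - {v}, gE = {e \<in> gE (Rg P G). v \<notin> e} \<union> {{a, b}},
          glab = glab (Rg P G), gR = gR (Rg P G)\<rparr>"
        by (rule fc_step.sup) (use v False nb in \<open>auto simp: Rg_def\<close>)
      moreover have "\<lparr>gV = gV (Rg P G) - {v}, gE = {e \<in> gE (Rg P G). v \<notin> e} \<union> {{a, b}},
          glab = glab (Rg P G), gR = gR (Rg P G)\<rparr> = Rg P G'"
        unfolding Rg_def G'_def using False True by auto
      ultimately show ?thesis using inv' by simp
    next
      case False2: False
      have "\<not> (a \<in> P \<and> b \<in> P)"
      proof
        assume "a \<in> P \<and> b \<in> P"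
        then have "cross P {v, a} \<and> cross P {v, b}" using False unfolding cross_def by auto
        then show False using not_both by simp
      qed
      define c where "c = (if a \<in> P then b else a)"
      have abP: "{a, b} \<inter> P \<noteq> {}" using False2 by auto
      have sub: "{f\<in>gE (Rg P G). v \<in> f} \<subseteq> {{v, c}}"
      proof
        fix f assume f: "f \<in> {f\<in>gE (Rg P G). v \<in> f}"
        then have f1: "f \<in> gE G" "f \<inter> P = {}" "v \<in> f" unfolding Rg_def by auto
        obtain u where u: "f = {v, u}" using nb_edge[OF w f1(1,3)] by blast
        then have "u = a \<or> u = b" using nbr f1(1) by simp
        moreover have "u \<notin> P" using u f1(2) by auto
        ultimately have "u = c" using \<open>\<not> (a \<in> P \<and> b \<in> P)\<close> False2 unfolding c_def by auto
        then show "f \<in> {{v, c}}" using u by simp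
      qed
      have "deg (gE (Rg P G)) v \<le> card {{v, c}}" unfolding deg_def using sub by (intro card_mono) auto
      then have d: "deg (gE (Rg P G)) v < 2" by simp
      have "fc_step X (Rg P G) \<lparr>gV = gV (Rg P G) - {v}, gE = {e \<in> gE (Rg P G). v \<notin> e},
          glab = glab (Rg P G), gR = gR (Rg P G) - {v}\<rparr>"
        by (rule fc_step.del) (use v False d in \<open>auto simp: Rg_def\<close>)
      moreover have "\<lparr>gV = gV (Rg P G) - {v}, gE = {e \<in> gE (Rg P G). v \<notin> e},
          glab = glab (Rg P G), gR = gR (Rg P G) - {v}\<rparr> = Rg P G'"
        unfolding Rg_def G'_def using False abP v(3) by auto
      ultimately show ?thesis using inv' by simp
    qed
  qed
qed

lemma sim_step:
  assumes "fc_step X G G'" "Inv X P G"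
  shows "Inv X P G' \<and> (Rg P G' = Rg P G \<or> fc_step X (Rg P G) (Rg P G'))"
  using assms
proof (induction rule: fc_step.induct)
  case (del v G) show ?case by (rule sim_del[OF del(4) del(1) del(2) del(3)])
next
  case (sup v G a b) show ?case by (rule sim_sup[OF sup(6) sup(1) sup(2) sup(3) sup(4) sup(5)])
qed

lemma sim_star:
  assumes "(fc_step X)\<^sup>*\<^sup>* G H" "Inv X P G"
  shows "Inv X P H \<and> (fc_step X)\<^sup>*\<^sup>* (Rg P G) (Rg P H)"
  using assms(1)
proof (induction rule: rtranclp_induct)
  case base then show ?case using assms(2) by simp
next
  case (step y z)
  have "Inv X P z \<and> (Rg P z = Rg P y \<or> fc_step X (Rg P y) (Rg P z))"
    using sim_step[OF step(2)] step(3) by simp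
  then show ?case using step(3) by (metis rtranclp.rtrancl_into_rtrancl)
qed

lemma no_P:
  assumes inv: "Inv X P H" and nostep: "\<not> (\<exists>H'. fc_step X H H')"
  shows "gV H \<inter> P = {}"
proof (rule ccontr)
  assume ne: "gV H \<inter> P \<noteq> {}"
  define S where "S = gV H \<inter> P"
  have w: "wfg H" using inv Inv_def by blast
  have finE: "finite (gE H)" using wfg_finE[OF w] .
  have finS: "finite S" using w unfolding S_def wfg_def by simp
  have deg2: "2 \<le> card {f\<in>gE H. v \<in> f}" if "v \<in> S" for v
  proof (rule ccontr)
    assume "\<not> 2 \<le> card {f\<in>gE H. v \<in> f}"
    then have d: "deg (gE H) v < 2" unfolding deg_def by simp
    have "v \<notin> glab H ` X" using inv that unfolding Inv_def S_def by auto
    moreover have "v \<in> gV H" using that S_def by simp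
    ultimately have "fc_step X H \<lparr>gV = gV H - {v}, gE = {e \<in> gE H. v \<notin> e}, glab = glab H, gR = gR H - {v}\<rparr>"
      using d by (intro fc_step.del)
    then show False using nostep by blast
  qed
  have "(\<Sum>v\<in>S. 2) \<le> (\<Sum>v\<in>S. card {f\<in>gE H. v \<in> f})" using deg2 by (intro sum_mono) simp
  also have "\<dots> = (\<Sum>f\<in>gE H. card (f \<inter> S))" by (rule deg_sum[OF finE finS])
  also have "\<dots> \<le> (\<Sum>f\<in>gE H. (if f \<subseteq> S then 2 else 0) + (if cross P f then 1 else 0))"
  proof (rule sum_mono)
    fix f assume f: "f \<in> gE H"
    obtain u w where uw: "u \<in> gV H" "w \<in> gV H" "u \<noteq> w" "f = {u, w}" using wfgD[OF w f] by blast
    have c: "card (f \<inter> S) = (if u \<in> S then 1 else 0) + (if w \<in> S then 1 else 0)"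
      using card_doubleton_int[OF uw(3)] uw(4) by simp
    show "card (f \<inter> S) \<le> (if f \<subseteq> S then 2 else 0) + (if cross P f then 1 else 0)"
      using c uw unfolding S_def cross_def by auto
  qed
  also have "\<dots> = 2 * card {f\<in>gE H. f \<subseteq> S} + card {f\<in>gE H. cross P f}"
  proof -
    have "(\<Sum>f\<in>gE H. (if f \<subseteq> S then 2 else 0) + (if cross P f then 1 else 0)) =
       (\<Sum>f\<in>gE H. (if f \<subseteq> S then 2 else 0)) + (\<Sum>f\<in>gE H. (if cross P f then 1 else 0))"
      by (rule sum.distrib)
    also have "(\<Sum>f\<in>gE H. (if f \<subseteq> S then 2 else 0)) = (\<Sum>f\<in>{f\<in>gE H. f \<subseteq> S}. (2::nat))"
      using sum.inter_filter[OF finE, of "\<lambda>_. 2::nat" "\<lambda>f. f \<subseteq> S"] by simp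
    also have "(\<Sum>f\<in>gE H. (if cross P f then 1 else 0)) = (\<Sum>f\<in>{f\<in>gE H. cross P f}. (1::nat))"
      using sum.inter_filter[OF finE, of "\<lambda>_. 1::nat" "\<lambda>f. cross P f"] by simp
    finally show ?thesis by simp
  qed
  finally have ineq: "2 * card S \<le> 2 * card {f\<in>gE H. f \<subseteq> S} + card {f\<in>gE H. cross P f}" by simp
  have "card {f\<in>gE H. cross P f} \<le> 1"
  proof -
    have "finite {f\<in>gE H. cross P f}" using finE by simp
    moreover have "\<forall>f\<in>{f\<in>gE H. cross P f}. \<forall>g\<in>{f\<in>gE H. cross P f}. f = g"
      using inv unfolding Inv_def by blast
    ultimately have "card {f\<in>gE H. cross P f} \<le> Suc 0" using card_le_Suc0_iff_eq by blast
    then show ?thesis by simp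
  qed
  moreover have "card {f\<in>gE H. f \<subseteq> S} < card S"
  proof -
    have "S \<subseteq> P \<inter> gV H" "S \<noteq> {}" using ne unfolding S_def by auto
    then show ?thesis using inv unfolding Inv_def by blast
  qed
  ultimately show False using ineq by linarith
qed

lemma Rg_id:
  assumes "wfg H" "gV H \<inter> P = {}"
  shows "Rg P H = H"
proof -
  have "{f\<in>gE H. f \<inter> P = {}} = gE H"
  proof
    show "gE H \<subseteq> {f\<in>gE H. f \<inter> P = {}}"
    proof
      fix f assume f: "f \<in> gE H"
      obtain u w where "u \<in> gV H" "w \<in> gV H" "f = {u, w}" using wfgD[OF assms(1) f] by blast
      then show "f \<in> {f\<in>gE H. f \<inter> P = {}}" using f assms(2) by auto
    qed
  qed auto
  moreover have "gV H - P = gV H" using assms(2) by auto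
  moreover have "gR H - (P \<inter> gV H) = gR H" using assms(2) by auto
  ultimately show ?thesis unfolding Rg_def by simp
qed

lemma delete_set:
  assumes "finite S"
  shows "S \<subseteq> gV G \<Longrightarrow> (\<forall>x\<in>X. glab G x \<notin> S) \<Longrightarrow> (\<forall>f\<in>gE G. f \<inter> S = {}) \<Longrightarrow>
    (fc_step X)\<^sup>*\<^sup>* G \<lparr>gV = gV G - S, gE = gE G, glab = glab G, gR = gR G - S\<rparr>"
  using assms
proof (induction S rule: finite_induct)
  case empty
  have eq: "\<lparr>gV = gV G - {}, gE = gE G, glab = glab G, gR = gR G - {}\<rparr> = G" by (cases G) simp
  show ?case by (subst eq) simp
next
  case (insert v S)
  let ?G = "\<lparr>gV = gV G - S, gE = gE G, glab = glab G, gR = gR G - S\<rparr>"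
  have IH: "(fc_step X)\<^sup>*\<^sup>* G ?G" using insert by auto
  have "{f \<in> gE G. v \<in> f} = {}" using insert(6) by auto
  then have d: "deg (gE ?G) v < 2" unfolding deg_def by (simp only: lgraph.select_convs card.empty)
  have "v \<in> gV ?G" "v \<notin> glab ?G ` X" using insert by auto
  then have "fc_step X ?G \<lparr>gV = gV ?G - {v}, gE = {e \<in> gE ?G. v \<notin> e}, glab = glab ?G, gR = gR ?G - {v}\<rparr>"
    using d by (intro fc_step.del)
  moreover have "\<lparr>gV = gV ?G - {v}, gE = {e \<in> gE ?G. v \<notin> e}, glab = glab ?G, gR = gR ?G - {v}\<rparr> =
     \<lparr>gV = gV G - insert v S, gE = gE G, glab = glab G, gR = gR G - insert v S\<rparr>"
    using \<open>{f \<in> gE G. v \<in> f} = {}\<close> by auto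
  ultimately show ?case using IH by (metis rtranclp.rtrancl_into_rtrancl)
qed

lemma comps_lab:
  assumes "L \<subseteq> W"
  shows "{C \<inter> L | C. C \<in> comps W A \<and> C \<inter> L \<noteq> {}} = {{l'\<in>L. reach A l l'} | l. l \<in> L}"
proof
  show "{C \<inter> L | C. C \<in> comps W A \<and> C \<inter> L \<noteq> {}} \<subseteq> {{l'\<in>L. reach A l l'} | l. l \<in> L}"
  proof
    fix Z assume "Z \<in> {C \<inter> L | C. C \<in> comps W A \<and> C \<inter> L \<noteq> {}}"
    then obtain C where C: "Z = C \<inter> L" "C \<in> comps W A" "C \<inter> L \<noteq> {}" by blast
    then obtain w where w: "w \<in> W" "C = {u \<in> W. reach A w u}" unfolding comps_def by blast
    obtain l where l: "l \<in> C \<inter> L" using C(3) by blast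
    then have rwl: "reach A w l" using w by simp
    have "C \<inter> L = {l'\<in>L. reach A l l'}"
    proof
      show "C \<inter> L \<subseteq> {l'\<in>L. reach A l l'}"
        using w(2) reach_trans[OF reach_sym[OF rwl]] by auto
      show "{l'\<in>L. reach A l l'} \<subseteq> C \<inter> L"
        using w(2) reach_trans[OF rwl] assms by auto
    qed
    then show "Z \<in> {{l'\<in>L. reach A l l'} | l. l \<in> L}" using C(1) l by blast
  qed
  show "{{l'\<in>L. reach A l l'} | l. l \<in> L} \<subseteq> {C \<inter> L | C. C \<in> comps W A \<and> C \<inter> L \<noteq> {}}"
  proof
    fix Z assume "Z \<in> {{l'\<in>L. reach A l l'} | l. l \<in> L}"
    then obtain l where l: "Z = {l'\<in>L. reach A l l'}" "l \<in> L" by blast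
    define C where "C = {u \<in> W. reach A l u}"
    have "C \<in> comps W A" unfolding comps_def C_def using l(2) assms by blast
    moreover have "C \<inter> L = Z" unfolding C_def l(1) using assms by auto
    moreover have "l \<in> C \<inter> L" unfolding C_def using l(2) assms by auto
    ultimately show "Z \<in> {C \<inter> L | C. C \<in> comps W A \<and> C \<inter> L \<noteq> {}}" by blast
  qed
qed

lemma croots_img:
  "croots X rho F = lca (ftree F) rho ` {C \<inter> tlab (ftree F) ` X | C. C \<in> comps (fW F) (fA F) \<and> C \<inter> tlab (ftree F) ` X \<noteq> {}}"
  unfolding croots_def by blast

lemma reach_outside:
  assumes "reach A u w" "u \<notin> P" "\<forall>f\<in>A. cross P f \<longrightarrow> f = {c, c'}" "c \<in> P"
  shows "(w \<notin> P \<longrightarrow> reach {f\<in>A. f \<inter> P = {}} u w) \<and> (w \<in> P \<longrightarrow> reach {f\<in>A. f \<inter> P = {}} u c')"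
  using assms(1)
proof (induction rule: reach_induct)
  case refl then show ?case using assms(2) by simp
next
  case (step y x)
  let ?A = "{f\<in>A. f \<inter> P = {}}"
  show ?case
  proof (cases "y \<in> P")
    case True
    show ?thesis
    proof (cases "x \<in> P")
      case True then show ?thesis using step(3) \<open>y \<in> P\<close> by simp
    next
      case False
      then have "cross P {y, x}" using True unfolding cross_def by auto
      then have "{y, x} = {c, c'}" using assms(3) step(2) by blast
      then have "x = c'" using False assms(4) by (auto simp: doubleton_eq_iff)
      then show ?thesis using step(3) True False by simp
    qed
  next
    case False
    then have ry: "reach ?A u y" using step(3) by simp
    show ?thesis
    proof (cases "x \<in> P")
      case True
      then have "cross P {y, x}" using False unfolding cross_def by auto
      then have "{y, x} = {c, c'}" using assms(3) step(2) by blast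
      then have "y = c'" using False assms(4) by (auto simp: doubleton_eq_iff)
      then show ?thesis using ry True by simp
    next
      case False2: False
      then have "{y, x} \<in> ?A" using step(2) False by auto
      from reach_step[OF ry this] show ?thesis using False2 by simp
    qed
  qed
qed

lemma tog_del:
  "to_graph rt rho X (del_edges F D) = \<lparr>gV = fW F, gE = fA F - D, glab = tlab (ftree F),
     gR = (if rt then croots X rho (del_edges F D) else {})\<rparr>"
  by (simp add: to_graph_def del_edges_def)

lemma del_ftree[simp]: "ftree (del_edges F D) = ftree F" "fW (del_edges F D) = fW F" "fA (del_edges F D) = fA F - D"
  by (simp_all add: del_edges_def)

lemma xforest_facts:
  assumes "is_xforest rt rho X F"
  shows "finite (tV (ftree F))" "\<forall>f\<in>tE (ftree F). \<exists>u w. u \<in> tV (ftree F) \<and> w \<in> tV (ftree F) \<and> u \<noteq> w \<and> f = {u, w}"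
    "\<forall>u\<in>tV (ftree F). \<forall>w\<in>tV (ftree F). reach (tE (ftree F)) u w"
    "card (tE (ftree F)) + 1 = card (tV (ftree F))"
    "fW F \<subseteq> tV (ftree F)" "fA F \<subseteq> tE (ftree F)" "\<forall>f\<in>fA F. f \<subseteq> fW F" "tlab (ftree F) ` X \<subseteq> fW F"
  using assms unfolding is_xforest_def is_xtree_def by auto

lemma wfg_tog:
  assumes "is_xforest rt rho X F"
  shows "wfg (to_graph rt rho X (del_edges F D))" "glab (to_graph rt rho X (del_edges F D)) ` X \<subseteq> gV (to_graph rt rho X (del_edges F D))"
proof -
  note xf = xforest_facts[OF assms]
  show "wfg (to_graph rt rho X (del_edges F D))"
    unfolding tog_del
  proof (rule wfgI, goal_cases)
    case 1 then show ?case using xf(1,5) finite_subset by (simp only: lgraph.select_convs) blast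
  next
    case (2 f)
    then have f: "f \<in> fA F" by simp
    then have "f \<in> tE (ftree F)" "f \<subseteq> fW F" using xf(6,7) by auto
    then obtain u w where "u \<noteq> w" "f = {u, w}" using xf(2) by (meson edge_obtain)
    then show ?case using \<open>f \<subseteq> fW F\<close> by (simp only: lgraph.select_convs) auto
  qed
  show "glab (to_graph rt rho X (del_edges F D)) ` X \<subseteq> gV (to_graph rt rho X (del_edges F D))"
    unfolding tog_del using xf(8) by simp
qed

lemma key2:
  assumes xf: "is_xforest rt rho X F" and eA: "e \<in> fA F" "e = {c, c'}"
    and Pdef: "P = {v \<in> fW F. reach (fA F - D - {e}) c v}"
    and nolab: "\<forall>x\<in>X. tlab (ftree F) x \<notin> P"
    and fc: "fully_contracted X (to_graph rt rho X (del_edges F D)) H"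
  shows "fully_contracted X (to_graph rt rho X (del_edges F (D \<union> {f. f \<inter> P \<noteq> {}}))) H"
proof -
  note xff = xforest_facts[OF xf]
  define W where "W = fW F"
  define A where "A = fA F"
  define L where "L = tlab (ftree F) ` X"
  define D' where "D' = D \<union> {f. f \<inter> P \<noteq> {}}"
  have LW: "L \<subseteq> W" using xff(8) unfolding L_def W_def .
  have eW: "e \<subseteq> W" using xff(7) eA(1) unfolding W_def by blast
  have cW: "c \<in> W" using eW eA(2) by simp
  have cP: "c \<in> P" using cW unfolding Pdef W_def by simp
  have PW: "P \<subseteq> W" unfolding Pdef W_def by blast
  have crossE: "f = e" if f: "f \<in> A - D" "cross P f" for f
  proof (rule ccontr)
    assume ne: "f \<noteq> e"
    have fA: "f \<in> fA F" using f(1) A_def by simp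
    then have "f \<in> tE (ftree F)" "f \<subseteq> W" using xff(6,7) W_def by auto
    then obtain u w where uw: "f = {u, w}" by (meson edge_obtain xff(2))
    have fe: "f \<in> fA F - D - {e}" using f(1) ne A_def by simp
    have uwW: "u \<in> W" "w \<in> W" using \<open>f \<subseteq> W\<close> uw by auto
    have "(u \<in> P \<and> w \<notin> P) \<or> (w \<in> P \<and> u \<notin> P)" using f(2) uw unfolding cross_def by auto
    then show False
    proof
      assume h: "u \<in> P \<and> w \<notin> P"
      then have "reach (fA F - D - {e}) c u" using Pdef by simp
      from reach_step[OF this] fe uw have "reach (fA F - D - {e}) c w" by simp
      then have "w \<in> P" using uwW Pdef W_def by simp
      then show False using h by simp
    next
      assume h: "w \<in> P \<and> u \<notin> P"
      then have "reach (fA F - D - {e}) c w" using Pdef by simp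
      moreover have "{w, u} \<in> fA F - D - {e}" using fe uw by (simp add: insert_commute)
      ultimately have "reach (fA F - D - {e}) c u" using reach_step by metis
      then have "u \<in> P" using uwW Pdef W_def by simp
      then show False using h by simp
    qed
  qed
  define G0 where "G0 = to_graph rt rho X (del_edges F D)"
  define R0 where "R0 = (if rt then croots X rho (del_edges F D) else {})"
  have G0: "G0 = \<lparr>gV = W, gE = A - D, glab = tlab (ftree F), gR = R0\<rparr>"
    unfolding G0_def tog_del W_def A_def R0_def ..
  have wG0: "wfg G0" using wfg_tog(1)[OF xf] G0_def by simp
  have finT: "finite (tE (ftree F))"
  proof -
    have "tE (ftree F) \<subseteq> Pow (tV (ftree F))"
    proof
      fix f assume "f \<in> tE (ftree F)"
      then obtain u w where "u \<in> tV (ftree F)" "w \<in> tV (ftree F)" "f = {u, w}" by (rule edge_obtain[OF xff(2)])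
      then show "f \<in> Pow (tV (ftree F))" by simp
    qed
    then show ?thesis using xff(1) by (meson finite_Pow_iff finite_subset)
  qed
  have invG0: "Inv X P G0"
    unfolding Inv_def
  proof (intro conjI)
    show "wfg G0" by (rule wG0)
    show "\<forall>x\<in>X. glab G0 x \<notin> P" using nolab G0 by simp
    show "\<forall>f\<in>gE G0. \<forall>g\<in>gE G0. cross P f \<longrightarrow> cross P g \<longrightarrow> f = g"
    proof (intro ballI impI)
      fix f g assume fg: "f \<in> gE G0" "g \<in> gE G0" "cross P f" "cross P g"
      then have "f \<in> A - D" "g \<in> A - D" using G0 by simp_all
      then have "f = e" "g = e" using crossE fg(3,4) by blast+
      then show "f = g" by simp
    qed
    show "\<forall>S. S \<subseteq> P \<inter> gV G0 \<longrightarrow> S \<noteq> {} \<longrightarrow> card {f\<in>gE G0. f \<subseteq> S} < card S"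
    proof (intro allI impI)
      fix S assume S: "S \<subseteq> P \<inter> gV G0" "S \<noteq> {}"
      then have ST: "S \<subseteq> tV (ftree F)" using G0 xff(5) W_def by auto
      have "{f\<in>gE G0. f \<subseteq> S} \<subseteq> {f\<in>tE (ftree F). f \<subseteq> S}" using G0 xff(6) A_def by auto
      then have "card {f\<in>gE G0. f \<subseteq> S} \<le> card {f\<in>tE (ftree F). f \<subseteq> S}"
        using finT by (intro card_mono) auto
      also have "\<dots> < card S" using tree_bound[OF xff(1) xff(2) xff(3) xff(4) ST S(2)] .
      finally show "card {f\<in>gE G0. f \<subseteq> S} < card S" .
    qed
  qed
  have fcs: "(fc_step X)\<^sup>*\<^sup>* G0 H" and nostep: "\<not> (\<exists>H'. fc_step X H H')"
    using fc unfolding fully_contracted_def G0_def by auto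
  have sim: "Inv X P H \<and> (fc_step X)\<^sup>*\<^sup>* (Rg P G0) (Rg P H)" using sim_star[OF fcs invG0] .
  have "gV H \<inter> P = {}" using no_P[OF conjunct1[OF sim] nostep] .
  moreover have "wfg H" using conjunct1[OF sim] Inv_def by blast
  ultimately have "Rg P H = H" using Rg_id by blast
  then have s2: "(fc_step X)\<^sup>*\<^sup>* (Rg P G0) H" using sim by simp
  have AD': "A - D' = {f\<in>A - D. f \<inter> P = {}}" unfolding D'_def by auto
  have crossc: "\<forall>f\<in>A - D. cross P f \<longrightarrow> f = {c, c'}" using crossE eA(2) by blast
  have reach_eq: "reach (A - D') l l' = reach (A - D) l l'" if "l \<in> L" "l' \<in> L" for l l'
  proof
    assume "reach (A - D') l l'" then show "reach (A - D) l l'" by (rule reach_mono) (auto simp: D'_def)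
  next
    assume r: "reach (A - D) l l'"
    have "l \<notin> P" "l' \<notin> P" using that nolab L_def by auto
    from reach_outside[OF r \<open>l \<notin> P\<close> crossc cP] show "reach (A - D') l l'" using \<open>l' \<notin> P\<close> AD' by simp
  qed
  have cr_eq: "croots X rho (del_edges F D') = croots X rho (del_edges F D)"
  proof -
    have "{C \<inter> L | C. C \<in> comps W (A - D') \<and> C \<inter> L \<noteq> {}} = (\<lambda>l. {l'\<in>L. reach (A - D') l l'}) ` L"
      using comps_lab[OF LW, of "A - D'"] by blast
    also have "\<dots> = (\<lambda>l. {l'\<in>L. reach (A - D) l l'}) ` L"
    proof (rule image_cong)
      fix l assume "l \<in> L"
      then show "{l'\<in>L. reach (A - D') l l'} = {l'\<in>L. reach (A - D) l l'}" using reach_eq by blast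
    qed simp
    also have "\<dots> = {C \<inter> L | C. C \<in> comps W (A - D) \<and> C \<inter> L \<noteq> {}}"
      using comps_lab[OF LW, of "A - D"] by blast
    finally have eq: "{C \<inter> L | C. C \<in> comps W (A - D') \<and> C \<inter> L \<noteq> {}} =
        {C \<inter> L | C. C \<in> comps W (A - D) \<and> C \<inter> L \<noteq> {}}" .
    show ?thesis unfolding croots_img del_ftree W_def[symmetric] A_def[symmetric] L_def[symmetric] eq ..
  qed
  define G1 where "G1 = to_graph rt rho X (del_edges F D')"
  have G1: "G1 = \<lparr>gV = W, gE = A - D', glab = tlab (ftree F), gR = R0\<rparr>"
    unfolding G1_def tog_del W_def A_def R0_def cr_eq ..
  have "P \<subseteq> tV (ftree F)" using PW xff(5) unfolding W_def by (rule subset_trans)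
  then have finP: "finite P" using xff(1) by (rule finite_subset)
  have s1: "(fc_step X)\<^sup>*\<^sup>* G1 \<lparr>gV = gV G1 - P, gE = gE G1, glab = glab G1, gR = gR G1 - P\<rparr>"
  proof (rule delete_set[OF finP])
    show "P \<subseteq> gV G1" using G1 PW by simp
    show "\<forall>x\<in>X. glab G1 x \<notin> P" using G1 nolab by simp
    show "\<forall>f\<in>gE G1. f \<inter> P = {}" using G1 AD' by simp
  qed
  have "\<lparr>gV = gV G1 - P, gE = gE G1, glab = glab G1, gR = gR G1 - P\<rparr> = Rg P G0"
    unfolding G1 G0 Rg_def using AD' PW by auto
  then have "(fc_step X)\<^sup>*\<^sup>* G1 H" using s1 s2 by simp
  then show ?thesis using nostep unfolding fully_contracted_def G1_def D'_def by simp
qed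

lemma del_comp: "del_edges (del_edges F A) B = del_edges F (A \<union> B)"
  by (simp add: del_edges_def Diff_eq Int_assoc)

lemma del_empty: "del_edges F {} = F"
  by (simp add: del_edges_def)

lemma comp_label_closed:
  assumes xf: "is_xforest rt rho X Fp" and C: "C \<in> comp_labels X Fp" and x: "x \<in> C" and y: "y \<in> X"
    and r: "reach (fA Fp) (tlab (ftree Fp) x) (tlab (ftree Fp) y)"
  shows "y \<in> C"
proof -
  obtain K where K: "C = {z\<in>X. tlab (ftree Fp) z \<in> K}" "K \<in> comps (fW Fp) (fA Fp)"
    using C unfolding comp_labels_def by blast
  then obtain w0 where w0: "K = {u \<in> fW Fp. reach (fA Fp) w0 u}" unfolding comps_def by blast
  have "reach (fA Fp) w0 (tlab (ftree Fp) x)" using x K(1) w0 by simp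
  then have "reach (fA Fp) w0 (tlab (ftree Fp) y)" using r by (rule reach_trans)
  moreover have "tlab (ftree Fp) y \<in> fW Fp" using xforest_facts(8)[OF xf] y by blast
  ultimately show ?thesis using K(1) w0 y by simp
qed

lemma sub_q:
  assumes xfq: "is_xforest rt rho X Fq" and xfp: "is_xforest rt rho X Fp" and xF: "is_xforest rt rho X F"
    and subp: "subforest rt rho X F Fp" and subq: "subforest rt rho X F Fq"
    and eA: "e \<in> fA Fq" "e = {a, b}"
    and Cs: "Cs \<subseteq> comp_labels X Fp"
    and sa: "side_labels X Fq e a \<subseteq> \<Union>Cs" and sb: "side_labels X Fq e b \<inter> \<Union>Cs = {}"
  shows "subforest rt rho X F (del_edges Fq {e})"
proof -
  obtain D where "fequiv X (to_graph rt rho X F) (to_graph rt rho X (del_edges Fq D))"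
    using subq unfolding subforest_def by blast
  then obtain G1 H1 where fcF: "fully_contracted X (to_graph rt rho X F) G1"
    and fcD: "fully_contracted X (to_graph rt rho X (del_edges Fq D)) H1" and iso: "lg_iso X G1 H1"
    unfolding fequiv_def by blast
  have fcF0: "fully_contracted X (to_graph rt rho X (del_edges F {})) G1" using fcF by (simp only: del_empty)
  have fin_goal: "subforest rt rho X F (del_edges Fq {e})" if "e \<in> D'"
      "fully_contracted X (to_graph rt rho X (del_edges Fq D')) H1" for D'
  proof -
    have "del_edges (del_edges Fq {e}) D' = del_edges Fq D'"
      using that(1) by (simp add: del_comp insert_absorb)
    then have "fequiv X (to_graph rt rho X F) (to_graph rt rho X (del_edges (del_edges Fq {e}) D'))"
      unfolding fequiv_def using fcF that(2) iso by auto
    then show ?thesis unfolding subforest_def by blast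
  qed
  show ?thesis
  proof (cases "e \<in> D")
    case True then show ?thesis using fin_goal fcD by blast
  next
    case False
    define Pa where "Pa = {v \<in> fW Fq. reach (fA Fq - D - {e}) a v}"
    define Pb where "Pb = {v \<in> fW Fq. reach (fA Fq - D - {e}) b v}"
    let ?lq = "tlab (ftree Fq)"
    have eW: "e \<subseteq> fW Fq" using xforest_facts(7)[OF xfq] eA(1) by blast
    have claim: "(\<forall>x\<in>X. ?lq x \<notin> Pa) \<or> (\<forall>x\<in>X. ?lq x \<notin> Pb)"
    proof (rule ccontr)
      assume "\<not> ?thesis"
      then obtain x y where x: "x \<in> X" "?lq x \<in> Pa" and y: "y \<in> X" "?lq y \<in> Pb" by blast
      have r1: "reach (fA Fq - D - {e}) a (?lq x)" using x Pa_def by simp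
      have r2: "reach (fA Fq - D - {e}) b (?lq y)" using y Pb_def by simp
      have r1': "reach (fA Fq - D) (?lq x) a" using reach_sym[OF reach_mono[OF r1]] by blast
      have "{a, b} \<in> fA Fq - D" using eA False by simp
      from reach_step[OF r1' this] have "reach (fA Fq - D) (?lq x) b" .
      moreover have "reach (fA Fq - D) b (?lq y)" using reach_mono[OF r2] by blast
      ultimately have rq: "reach (fA Fq - D) (?lq x) (?lq y)" by (rule reach_trans)
      have xs: "x \<in> side_labels X Fq e a" unfolding side_labels_def using x(1) reach_mono[OF r1] by blast
      have ys: "y \<in> side_labels X Fq e b" unfolding side_labels_def using y(1) reach_mono[OF r2] by blast
      have rF: "reach (fA F) (tlab (ftree F) x) (tlab (ftree F) y)"
      proof -
        have rq': "reach (gE (to_graph rt rho X (del_edges Fq D))) (glab (to_graph rt rho X (del_edges Fq D)) x)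
            (glab (to_graph rt rho X (del_edges Fq D)) y)" using rq by (simp add: tog_del)
        have "reach (gE (to_graph rt rho X (del_edges F {}))) (glab (to_graph rt rho X (del_edges F {})) x)
            (glab (to_graph rt rho X (del_edges F {})) y)"
          using lab_transfer_rev[OF fcF0 fcD iso wfg_tog(1)[OF xF] wfg_tog(1)[OF xfq]
              wfg_tog(2)[OF xF] wfg_tog(2)[OF xfq] x(1) y(1) rq'] .
        then show ?thesis by (simp add: tog_del)
      qed
      obtain Dp where "fequiv X (to_graph rt rho X F) (to_graph rt rho X (del_edges Fp Dp))"
        using subp unfolding subforest_def by blast
      then obtain G2 H2 where fcF2: "fully_contracted X (to_graph rt rho X F) G2"
        and fcD2: "fully_contracted X (to_graph rt rho X (del_edges Fp Dp)) H2" and iso2: "lg_iso X G2 H2"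
        unfolding fequiv_def by blast
      have fcF20: "fully_contracted X (to_graph rt rho X (del_edges F {})) G2" using fcF2 by (simp only: del_empty)
      have rF': "reach (gE (to_graph rt rho X (del_edges F {}))) (glab (to_graph rt rho X (del_edges F {})) x)
            (glab (to_graph rt rho X (del_edges F {})) y)" using rF by (simp add: tog_del)
      have "reach (gE (to_graph rt rho X (del_edges Fp Dp))) (glab (to_graph rt rho X (del_edges Fp Dp)) x)
            (glab (to_graph rt rho X (del_edges Fp Dp)) y)"
        using lab_transfer[OF fcF20 fcD2 iso2 wfg_tog(1)[OF xF] wfg_tog(1)[OF xfp]
              wfg_tog(2)[OF xF] wfg_tog(2)[OF xfp] x(1) y(1) rF'] .
      then have "reach (fA Fp - Dp) (tlab (ftree Fp) x) (tlab (ftree Fp) y)" by (simp add: tog_del)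
      then have rp: "reach (fA Fp) (tlab (ftree Fp) x) (tlab (ftree Fp) y)" by (rule reach_mono) blast
      obtain C where C: "C \<in> Cs" "x \<in> C" using xs sa by blast
      have "y \<in> C" using comp_label_closed[OF xfp _ C(2) y(1) rp] C(1) Cs by blast
      then show False using ys sb C(1) by blast
    qed
    from claim show ?thesis
    proof
      assume nl: "\<forall>x\<in>X. ?lq x \<notin> Pa"
      have "a \<in> Pa" using eW eA(2) Pa_def by simp
      then have "e \<in> D \<union> {f. f \<inter> Pa \<noteq> {}}" using eA(2) by blast
      moreover have "fully_contracted X (to_graph rt rho X (del_edges Fq (D \<union> {f. f \<inter> Pa \<noteq> {}}))) H1"
        by (rule key2[OF xfq eA Pa_def nl fcD])
      ultimately show ?thesis by (rule fin_goal)
    next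
      assume nl: "\<forall>x\<in>X. ?lq x \<notin> Pb"
      have eb: "e = {b, a}" using eA(2) by (simp add: insert_commute)
      have "b \<in> Pb" using eW eA(2) Pb_def by simp
      then have "e \<in> D \<union> {f. f \<inter> Pb \<noteq> {}}" using eA(2) by blast
      moreover have "fully_contracted X (to_graph rt rho X (del_edges Fq (D \<union> {f. f \<inter> Pb \<noteq> {}}))) H1"
        by (rule key2[OF xfq eA(1) eb Pb_def nl fcD])
      ultimately show ?thesis by (rule fin_goal)
    qed
  qed
qed

theorem lemma3p1:
  fixes X :: "'x set" and rho :: 'x and rt :: bool and m p q :: nat
    and Fs :: "nat \<Rightarrow> ('v, 'x) xfor" and Cs :: "'x set set" and e :: "'v set" and a b :: 'v
  assumes "finite X"
    and "2 \<le> m"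
    and "\<forall>i \<in> {1..m}. is_xforest rt rho X (Fs i)"
    and "p \<in> {1..m}" and "q \<in> {1..m}" and "q \<noteq> p"
    and "Cs \<noteq> {}" and "Cs \<subseteq> comp_labels X (Fs p)"
    and "e \<in> fA (Fs q)" and "e = {a, b}" and "a \<noteq> b"
    and "side_labels X (Fs q) e a \<subseteq> \<Union>Cs"
    and "side_labels X (Fs q) e b \<inter> \<Union>Cs = {}"
  shows "\<forall>F. max_agreement_forest rt rho X m (Fs(q := del_edges (Fs q) {e})) F
           \<longleftrightarrow> max_agreement_forest rt rho X m Fs F"
proof -
  let ?Fs' = "Fs(q := del_edges (Fs q) {e})"
  have AF: "agreement_forest rt rho X m ?Fs' F \<longleftrightarrow> agreement_forest rt rho X m Fs F" for F
  proof
    assume af: "agreement_forest rt rho X m ?Fs' F"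
    show "agreement_forest rt rho X m Fs F"
      unfolding agreement_forest_def
    proof (intro conjI ballI)
      show "is_xforest rt rho X F" using af unfolding agreement_forest_def by blast
      fix i assume i: "i \<in> {1..m}"
      have s: "subforest rt rho X F (?Fs' i)" using af i unfolding agreement_forest_def by blast
      show "subforest rt rho X F (Fs i)"
      proof (cases "i = q")
        case True
        then obtain D where "fequiv X (to_graph rt rho X F) (to_graph rt rho X (del_edges (del_edges (Fs q) {e}) D))"
          using s unfolding subforest_def by auto
        then show ?thesis unfolding subforest_def del_comp using True by blast
      next
        case False then show ?thesis using s by simp
      qed
    qed
  next
    assume af: "agreement_forest rt rho X m Fs F"
    have xF: "is_xforest rt rho X F" using af unfolding agreement_forest_def by blast
    show "agreement_forest rt rho X m ?Fs' F"
      unfolding agreement_forest_def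
    proof (intro conjI ballI)
      show "is_xforest rt rho X F" by (rule xF)
      fix i assume i: "i \<in> {1..m}"
      show "subforest rt rho X F (?Fs' i)"
      proof (cases "i = q")
        case True
        have "subforest rt rho X F (del_edges (Fs q) {e})"
        proof (rule sub_q)
          show "is_xforest rt rho X (Fs q)" using assms(3,5) by blast
          show "is_xforest rt rho X (Fs p)" using assms(3,4) by blast
          show "is_xforest rt rho X F" by (rule xF)
          show "subforest rt rho X F (Fs p)" using af assms(4) unfolding agreement_forest_def by blast
          show "subforest rt rho X F (Fs q)" using af assms(5) unfolding agreement_forest_def by blast
        qed (use assms in auto)
        then show ?thesis using True by simp
      next
        case False
        then show ?thesis using af i unfolding agreement_forest_def by simp
      qed
    qed
  qed
  show ?thesis unfolding max_agreement_forest_def using AF by simp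
qed

end
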